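(* Let $I=\{a,b,c,d,e\}$ and $X=I^{\mathbb N_0}$ with the metric $\rho(x,y)=0$ if $x=y$ and $\rho(x,y)=\frac1{i+1}$ where $i=\min\{j:x_j\ne y_j\}$ otherwise. Let $\sigma$ be the shift $\sigma(x_0,x_1,\dots)=(x_1,x_2,\dots)$. Let $U=\{0,1,2,3\}$ and define $F_0=\sigma^2$, $F_1=\sigma^3$, $F_2\equiv b^\infty$ (constant map), and $F_3(x)=(ab)^\infty$ if $x_0=b$, $F_3(x)=b^\infty$ otherwise. Consider the control system $x_{n+1}=F_{u_n}(x_n)$ and let $Q\subset X$ be the set of all sequences that are infinite concatenations $w_0w_1w_2\cdots$ of words $w_i\in\{ab,\,cde\}$. Then $Q$ is (compact and) equi-invariant in the mean, but not finitely equi-invariant.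
   Context: For $\omega=(\omega_0,\omega_1,\dots)\in\mathscr U=U^{\mathbb N_0}$ and $x\in X$: $\phi(0,x,\omega)=x$, $\phi(k,x,\omega)=F_{\omega_{k-1}}\circ\cdots\circ F_{\omega_0}(x)$. $d(y,Q)=\inf_{q\in Q}\rho(y,q)$, $B_\varepsilon(Q)=\{y:d(y,Q)<\varepsilon\}$, $B(x,\delta)$ open ball, $\mathbb N=\{1,2,\dots\}$. A point $x\in Q$ is a finitely equi-invariant point of $Q$ if for every $\varepsilon>0$ there exist $\delta>0$ and a finite set $F\subset\mathscr U$ such that for every $y\in B(x,\delta)\cap Q$ there is $\omega\in F$ with $\phi(k,y,\omega)\in B_\varepsilon(Q)$ for all $k\in\mathbb N_0$. It is an equi-invariant point in the mean of $Q$ if for every $\varepsilon>0$ there exist $\delta>0$ and $\omega\in\mathscr U$ such that $\frac1n\sum_{i=0}^{n-1}d(\phi(i,y,\omega),Q)<\varepsilon$ for all $n\in\mathbb N$ and all $y\in B(x,\delta)\cap Q$. $Q$ has one of these properties if all its points do. *)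

theory Defs
  imports "HOL-Analysis.Analysis" "HOL-Library.Stream"
begin

definition ctrl_seqs :: "'u set \<Rightarrow> (nat \<Rightarrow> 'u) set" where
  "ctrl_seqs U = {\<omega>. \<forall>k. \<omega> k \<in> U}"

fun phi :: "('u \<Rightarrow> 'x \<Rightarrow> 'x) \<Rightarrow> nat \<Rightarrow> 'x \<Rightarrow> (nat \<Rightarrow> 'u) \<Rightarrow> 'x" where
  "phi F 0 x \<omega> = x"
| "phi F (Suc k) x \<omega> = F (\<omega> k) (phi F k x \<omega>)"

definition setdist :: "('x \<Rightarrow> 'x \<Rightarrow> real) \<Rightarrow> 'x \<Rightarrow> 'x set \<Rightarrow> real" where
  "setdist rho y Q = (INF q\<in>Q. rho y q)"

definition nbhd :: "('x \<Rightarrow> 'x \<Rightarrow> real) \<Rightarrow> real \<Rightarrow> 'x set \<Rightarrow> 'x set" where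
  "nbhd rho \<epsilon> Q = {y. setdist rho y Q < \<epsilon>}"

definition oball :: "('x \<Rightarrow> 'x \<Rightarrow> real) \<Rightarrow> 'x \<Rightarrow> real \<Rightarrow> 'x set" where
  "oball rho x \<delta> = {y. rho x y < \<delta>}"

definition fin_equi_inv_point ::
  "('x \<Rightarrow> 'x \<Rightarrow> real) \<Rightarrow> ('u \<Rightarrow> 'x \<Rightarrow> 'x) \<Rightarrow> 'u set \<Rightarrow> 'x set \<Rightarrow> 'x \<Rightarrow> bool" where
  "fin_equi_inv_point rho F U Q x \<longleftrightarrow> x \<in> Q \<and>
     (\<forall>\<epsilon>>0. \<exists>\<delta>>0. \<exists>Fs. Fs \<subseteq> ctrl_seqs U \<and> finite Fs \<and>
        (\<forall>y \<in> oball rho x \<delta> \<inter> Q. \<exists>\<omega>\<in>Fs. \<forall>k. phi F k y \<omega> \<in> nbhd rho \<epsilon> Q))"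

definition fin_equi_inv ::
  "('x \<Rightarrow> 'x \<Rightarrow> real) \<Rightarrow> ('u \<Rightarrow> 'x \<Rightarrow> 'x) \<Rightarrow> 'u set \<Rightarrow> 'x set \<Rightarrow> bool" where
  "fin_equi_inv rho F U Q \<longleftrightarrow> (\<forall>x\<in>Q. fin_equi_inv_point rho F U Q x)"

definition equi_inv_mean_point ::
  "('x \<Rightarrow> 'x \<Rightarrow> real) \<Rightarrow> ('u \<Rightarrow> 'x \<Rightarrow> 'x) \<Rightarrow> 'u set \<Rightarrow> 'x set \<Rightarrow> 'x \<Rightarrow> bool" where
  "equi_inv_mean_point rho F U Q x \<longleftrightarrow> x \<in> Q \<and>
     (\<forall>\<epsilon>>0. \<exists>\<delta>>0. \<exists>\<omega>\<in>ctrl_seqs U.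
        \<forall>n::nat. n \<ge> 1 \<longrightarrow> (\<forall>y \<in> oball rho x \<delta> \<inter> Q.
           (1 / real n) * (\<Sum>i<n. setdist rho (phi F i y \<omega>) Q) < \<epsilon>))"

definition equi_inv_mean ::
  "('x \<Rightarrow> 'x \<Rightarrow> real) \<Rightarrow> ('u \<Rightarrow> 'x \<Rightarrow> 'x) \<Rightarrow> 'u set \<Rightarrow> 'x set \<Rightarrow> bool" where
  "equi_inv_mean rho F U Q \<longleftrightarrow> (\<forall>x\<in>Q. equi_inv_mean_point rho F U Q x)"

datatype sym = A | B | C | D | E

type_synonym seq = "nat \<Rightarrow> sym"

definition rho :: "seq \<Rightarrow> seq \<Rightarrow> real" where
  "rho x y = (if x = y then 0 else 1 / (real (LEAST j. x j \<noteq> y j) + 1))"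

definition shift :: "seq \<Rightarrow> seq" where
  "shift x = (\<lambda>n. x (Suc n))"

definition Fex :: "nat \<Rightarrow> seq \<Rightarrow> seq" where
  "Fex u x = (if u = 0 then (shift ^^ 2) x
              else if u = 1 then (shift ^^ 3) x
              else if u = 2 then (\<lambda>n. B)
              else if x 0 = B then (\<lambda>n. if even n then A else B)
              else (\<lambda>n. B))"

definition Uex :: "nat set" where
  "Uex = {0, 1, 2, 3}"

definition Qex :: "seq set" where
  "Qex = {x. \<exists>ws. sset ws \<subseteq> {[A, B], [C, D, E]} \<and> x = snth (flat ws)}"

end

theory Submission
  imports Defs
begin

lemma rho_nonneg: "0 \<le> rho x y"
  by (simp add: rho_def)

lemma rho_le1: "rho x y \<le> 1"
  by (simp add: rho_def)

lemma rho_self[simp]: "rho x x = 0"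
  by (simp add: rho_def)

lemma rho_le:
  assumes "\<forall>j<n. x j = y j"
  shows "rho x y \<le> 1 / (real n + 1)"
proof (cases "x = y")
  case True then show ?thesis by simp
next
  case False
  then have ex: "\<exists>j. x j \<noteq> y j" by (auto simp: fun_eq_iff)
  let ?L = "LEAST j. x j \<noteq> y j"
  have "x ?L \<noteq> y ?L" using LeastI_ex[OF ex] .
  then have "n \<le> ?L" using assms by (meson not_less)
  then have "1 / (real ?L + 1) \<le> 1 / (real n + 1)"
    by (simp add: frac_le)
  then show ?thesis using False by (simp add: rho_def)
qed

lemma rho_lt:
  assumes "rho x y < 1 / (real n + 1)" "j \<le> n"
  shows "x j = y j"
proof (cases "x = y")
  case True then show ?thesis by simp
next
  case False
  let ?L = "LEAST j. x j \<noteq> y j"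
  have "1 / (real ?L + 1) < 1 / (real n + 1)" using assms False by (simp add: rho_def)
  then have "n < ?L"
  proof (rule contrapos_pp)
    assume "\<not> n < ?L"
    then have "real ?L + 1 \<le> real n + 1" by simp
    then show "\<not> 1 / (real ?L + 1) < 1 / (real n + 1)"
      by (simp add: not_less frac_le)
  qed
  then have "j < ?L" using assms by simp
  then show ?thesis using not_less_Least by blast
qed

lemma rho_sym: "rho x y = rho y x"
proof -
  have "(\<lambda>j. x j \<noteq> y j) = (\<lambda>j. y j \<noteq> x j)" by auto
  then show ?thesis unfolding rho_def by (metis)
qed

lemma rho_triangle: "rho x z \<le> rho x y + rho y z"
proof (cases "x = y \<or> y = z")
  case True then show ?thesis using rho_nonneg[of x y] rho_nonneg[of y z] by auto
next
  case False
  define a where "a = (LEAST j. x j \<noteq> y j)"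
  define b where "b = (LEAST j. y j \<noteq> z j)"
  have xy: "rho x y = 1 / (real a + 1)" using False by (simp add: rho_def a_def)
  have yz: "rho y z = 1 / (real b + 1)" using False by (simp add: rho_def b_def)
  have "\<forall>j<min a b. x j = z j"
  proof (intro allI impI)
    fix j assume "j < min a b"
    then have "j < a" "j < b" by auto
    then have "x j = y j" "y j = z j"
      using not_less_Least[of j "\<lambda>j. x j \<noteq> y j"] not_less_Least[of j "\<lambda>j. y j \<noteq> z j"]
      unfolding a_def b_def by auto
    then show "x j = z j" by simp
  qed
  then have "rho x z \<le> 1 / (real (min a b) + 1)" by (rule rho_le)
  also have "\<dots> \<le> rho x y + rho y z"
  proof (cases "a \<le> b")
    case True
    then have "min a b = a" by simp
    then show ?thesis using xy rho_nonneg[of y z] by simp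
  next
    case False
    then have "min a b = b" by simp
    then show ?thesis using yz rho_nonneg[of x y] by simp
  qed
  finally show ?thesis .
qed

lemma metric: "Metric_space UNIV rho"
proof
  fix x y z :: seq
  show "0 \<le> rho x y" by (rule rho_nonneg)
  show "rho x y = rho y x" by (rule rho_sym)
  show "rho x z \<le> rho x y + rho y z" by (rule rho_triangle)
  show "rho x y = 0 \<longleftrightarrow> x = y" by (simp add: rho_def)
qed

definition W :: "sym list set" where "W = {[A, B], [C, D, E]}"

definition abinf :: seq where "abinf = (\<lambda>n. if even n then A else B)"

lemma Qex_cases:
  assumes "y \<in> Qex"
  shows "(y 0 = A \<and> y 1 = B \<and> (\<lambda>n. y (n+2)) \<in> Qex) \<or>
         (y 0 = C \<and> y 1 = D \<and> y 2 = E \<and> (\<lambda>n. y (n+3)) \<in> Qex)"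
proof -
  obtain ws where ws: "sset ws \<subseteq> {[A, B], [C, D, E]}" "y = snth (flat ws)"
    using assms unfolding Qex_def by blast
  have hd: "shd ws \<in> {[A, B], [C, D, E]}" using ws(1) shd_sset by blast
  have tl: "sset (stl ws) \<subseteq> {[A, B], [C, D, E]}" using ws(1) stl_sset by (metis subset_iff)
  show ?thesis
  proof (cases "shd ws = [A, B]")
    case True
    then have fl: "flat ws = [A, B] @- flat (stl ws)" using flat_unfold[of ws] by simp
    have "(\<lambda>n. y (n+2)) = snth (flat (stl ws))" by (rule ext) (simp add: fl ws(2) eval_nat_numeral)
    then have "(\<lambda>n. y (n+2)) \<in> Qex" using tl unfolding Qex_def by blast
    then show ?thesis by (simp add: fl ws(2))
  next
    case False
    then have h: "shd ws = [C, D, E]" using hd by simp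
    then have fl: "flat ws = [C, D, E] @- flat (stl ws)" using flat_unfold[of ws] by simp
    have "(\<lambda>n. y (n+3)) = snth (flat (stl ws))" by (rule ext) (simp add: fl ws(2) eval_nat_numeral)
    then have "(\<lambda>n. y (n+3)) \<in> Qex" using tl unfolding Qex_def by blast
    then show ?thesis by (simp add: fl ws(2) eval_nat_numeral)
  qed
qed

lemma Qex_first: "y \<in> Qex \<Longrightarrow> y 0 = A \<or> y 0 = C"
  using Qex_cases by blast

lemma Qex_second: "y \<in> Qex \<Longrightarrow> y 1 = B \<or> y 1 = D"
  using Qex_cases by blast

lemma Qex_consAB:
  assumes "y \<in> Qex" "z 0 = A" "z 1 = B" "\<forall>n. z (n+2) = y n"
  shows "z \<in> Qex"
proof -
  obtain ws where ws: "sset ws \<subseteq> {[A, B], [C, D, E]}" "y = snth (flat ws)"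
    using assms unfolding Qex_def by blast
  have "z = snth (flat ([A, B] ## ws))"
  proof
    fix n show "z n = flat ([A, B] ## ws) !! n"
    proof (cases "n < 2")
      case True then have "n = 0 \<or> n = 1" by auto
      then show ?thesis using assms by auto
    next
      case False then obtain m where "n = m + 2" by (metis add.commute le_Suc_ex not_less)
      then show ?thesis using assms ws by (simp add: eval_nat_numeral)
    qed
  qed
  moreover have "sset ([A, B] ## ws) \<subseteq> {[A, B], [C, D, E]}" using ws by simp
  ultimately show ?thesis unfolding Qex_def by blast
qed

lemma Qex_consCDE:
  assumes "y \<in> Qex" "z 0 = C" "z 1 = D" "z 2 = E" "\<forall>n. z (n+3) = y n"
  shows "z \<in> Qex"
proof -
  obtain ws where ws: "sset ws \<subseteq> {[A, B], [C, D, E]}" "y = snth (flat ws)"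
    using assms unfolding Qex_def by blast
  have "z = snth (flat ([C, D, E] ## ws))"
  proof
    fix n show "z n = flat ([C, D, E] ## ws) !! n"
    proof (cases "n < 3")
      case True then have "n = 0 \<or> n = 1 \<or> n = 2" by auto
      then show ?thesis using assms by (auto simp: numeral_2_eq_2)
    next
      case False then obtain m where "n = m + 3" by (metis add.commute le_Suc_ex not_less)
      then show ?thesis using assms ws by (simp add: eval_nat_numeral)
    qed
  qed
  moreover have "sset ([C, D, E] ## ws) \<subseteq> {[A, B], [C, D, E]}" using ws by simp
  ultimately show ?thesis unfolding Qex_def by blast
qed

lemma flat_sconst_AB: "flat (sconst [A, B]) !! n = abinf n"
proof (induction n rule: less_induct)
  case (less n)
  have fl: "flat (sconst [A, B]) = [A, B] @- flat (sconst [A, B])"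
    by (metis flat_Stream list.distinct(1) siterate.code id_apply)
  show ?case
  proof (cases "n < 2")
    case True then have "n = 0 \<or> n = 1" by auto
    then show ?thesis by (subst fl) (auto simp: abinf_def)
  next
    case False then obtain m where m: "n = m + 2" by (metis add.commute le_Suc_ex not_less)
    have "flat (sconst [A, B]) !! n = flat (sconst [A, B]) !! m" by (subst fl) (simp add: m)
    also have "\<dots> = abinf m" by (rule less.IH) (simp add: m)
    also have "\<dots> = abinf n" by (simp add: abinf_def m)
    finally show ?thesis .
  qed
qed

lemma abinf_Q: "abinf \<in> Qex"
proof -
  have "abinf = snth (flat (sconst [A, B]))" using flat_sconst_AB by (simp add: fun_eq_iff)
  then show ?thesis unfolding Qex_def by (intro CollectI exI[of _ "sconst [A, B]"]) simp
qed

lemma snth_nats: "nats !! n = n"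
  by (simp add: Suc_funpow)

lemma sset_smap_nats: "sset (smap g nats) = range g"
  by (auto simp: sset_range snth_nats)

lemma W_ne: "xs \<in> W \<Longrightarrow> xs \<noteq> []"
  by (auto simp: W_def)

definition fW :: "(nat \<Rightarrow> sym list) \<Rightarrow> seq" where
  "fW g = snth (flat (smap g nats))"

abbreviation PT :: "(nat \<Rightarrow> sym list) topology" where
  "PT \<equiv> product_topology (\<lambda>_. discrete_topology W) UNIV"

lemma topspace_PT: "topspace PT = {g. \<forall>i. g i \<in> W}"
  by (auto simp: PiE_UNIV_domain)

lemma flat_prefix:
  "\<forall>xs\<in>sset ws. xs \<noteq> [] \<Longrightarrow> \<forall>xs\<in>sset ws'. xs \<noteq> [] \<Longrightarrow> \<forall>i\<le>j. ws !! i = ws' !! i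
   \<Longrightarrow> flat ws !! j = flat ws' !! j"
proof (induction j arbitrary: ws ws' rule: less_induct)
  case (less j)
  have sh: "shd ws = shd ws'" using less.prems(3) by (metis le0 snth.simps(1))
  have ne: "shd ws \<noteq> []" using less.prems(1) shd_sset by blast
  show ?case
  proof (cases "j < length (shd ws)")
    case True
    then show ?thesis using less.prems(1,2) sh by (simp add: flat_snth)
  next
    case False
    have L: "length (shd ws) > 0" using ne by simp
    have "flat (stl ws) !! (j - length (shd ws)) = flat (stl ws') !! (j - length (shd ws))"
    proof (rule less.IH)
      have "0 < j" using L False by linarith
      then show "j - length (shd ws) < j" using L by (simp add: diff_less)
      show "\<forall>xs\<in>sset (stl ws). xs \<noteq> []" using less.prems(1) stl_sset by metis
      show "\<forall>xs\<in>sset (stl ws'). xs \<noteq> []" using less.prems(2) stl_sset by metis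
      show "\<forall>i\<le>j - length (shd ws). stl ws !! i = stl ws' !! i"
      proof (intro allI impI)
        fix i assume "i \<le> j - length (shd ws)"
        then have "Suc i \<le> j" using L False by arith
        then have "ws !! Suc i = ws' !! Suc i" using less.prems(3) by blast
        then show "stl ws !! i = stl ws' !! i" by simp
      qed
    qed
    then show ?thesis using less.prems(1,2) sh False by (simp add: flat_snth)
  qed
qed

lemma fW_prefix:
  assumes "\<forall>i. g i \<in> W" "\<forall>i. h i \<in> W" "\<forall>i\<le>j. g i = h i"
  shows "fW g j = fW h j"
  unfolding fW_def
proof (rule flat_prefix)
  show "\<forall>xs\<in>sset (smap g nats). xs \<noteq> []" using assms(1) W_ne by (auto simp: sset_smap_nats)
  show "\<forall>xs\<in>sset (smap h nats). xs \<noteq> []" using assms(2) W_ne by (auto simp: sset_smap_nats)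
  show "\<forall>i\<le>j. smap g nats !! i = smap h nats !! i" using assms(3) by (simp add: snth_nats)
qed

lemma Qex_image: "Qex = fW ` topspace PT"
proof
  show "Qex \<subseteq> fW ` topspace PT"
  proof
    fix x assume "x \<in> Qex"
    then obtain ws where ws: "sset ws \<subseteq> {[A, B], [C, D, E]}" "x = snth (flat ws)"
      unfolding Qex_def by blast
    have "\<forall>i. ws !! i \<in> W" using ws(1) snth_sset unfolding W_def by blast
    then have "snth ws \<in> topspace PT" unfolding topspace_PT by blast
    moreover have "fW (snth ws) = x" using ws(2) stream_smap_nats[of ws] by (simp add: fW_def)
    ultimately show "x \<in> fW ` topspace PT" by blast
  qed
  show "fW ` topspace PT \<subseteq> Qex"
  proof
    fix x assume "x \<in> fW ` topspace PT"
    then obtain g where g: "\<forall>i. g i \<in> W" "x = fW g" unfolding topspace_PT by blast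
    have "sset (smap g nats) \<subseteq> {[A, B], [C, D, E]}" using g(1) by (auto simp: W_def sset_smap_nats)
    then show "x \<in> Qex" using g(2) unfolding Qex_def fW_def by blast
  qed
qed

lemma cyl_open:
  assumes "\<forall>i. g i \<in> W"
  shows "openin PT {h \<in> topspace PT. \<forall>i\<le>n. h i = g i}"
proof (induction n)
  case 0
  have "openin PT {h \<in> topspace PT. h 0 \<in> {g 0}}"
    by (rule openin_continuous_map_preimage[OF continuous_map_product_projection]) (use assms in auto)
  moreover have "{h \<in> topspace PT. \<forall>i\<le>0. h i = g i} = {h \<in> topspace PT. h 0 \<in> {g 0}}" by auto
  ultimately show ?case by simp
next
  case (Suc n)
  have "openin PT {h \<in> topspace PT. h (Suc n) \<in> {g (Suc n)}}"
    by (rule openin_continuous_map_preimage[OF continuous_map_product_projection]) (use assms in auto)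
  then have "openin PT ({h \<in> topspace PT. \<forall>i\<le>n. h i = g i} \<inter> {h \<in> topspace PT. h (Suc n) \<in> {g (Suc n)}})"
    by (rule openin_Int[OF Suc.IH])
  moreover have "{h \<in> topspace PT. \<forall>i\<le>Suc n. h i = g i} =
     {h \<in> topspace PT. \<forall>i\<le>n. h i = g i} \<inter> {h \<in> topspace PT. h (Suc n) \<in> {g (Suc n)}}"
    by (auto simp: le_Suc_eq)
  ultimately show ?case by simp
qed

lemma fW_cont: "continuous_map PT (Metric_space.mtopology UNIV rho) fW"
proof -
  interpret M: Metric_space UNIV rho by (rule metric)
  show ?thesis unfolding M.continuous_map_to_metric
  proof (intro ballI allI impI)
    fix g \<epsilon> assume g: "g \<in> topspace PT" and e: "(\<epsilon>::real) > 0"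
    then have gW: "\<forall>i. g i \<in> W" using topspace_PT by blast
    obtain n where n: "inverse (real (Suc n)) < \<epsilon>" using reals_Archimedean e by blast
    let ?U = "{h \<in> topspace PT. \<forall>i\<le>n. h i = g i}"
    have "\<forall>h\<in>?U. fW h \<in> M.mball (fW g) \<epsilon>"
    proof
      fix h assume h: "h \<in> ?U"
      then have hW: "\<forall>i. h i \<in> W" using topspace_PT by blast
      have "\<forall>j<Suc n. fW g j = fW h j"
        using fW_prefix[OF gW hW] h by auto
      then have "rho (fW g) (fW h) \<le> 1 / (real (Suc n) + 1)" by (rule rho_le)
      also have "\<dots> \<le> inverse (real (Suc n))" by (simp add: inverse_eq_divide frac_le)
      also have "\<dots> < \<epsilon>" by (rule n)
      finally show "fW h \<in> M.mball (fW g) \<epsilon>" by simp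
    qed
    then show "\<exists>U. openin PT U \<and> g \<in> U \<and> (\<forall>y\<in>U. fW y \<in> M.mball (fW g) \<epsilon>)"
      using cyl_open[OF gW, of n] g by blast
  qed
qed

lemma Qex_compact: "compactin (Metric_space.mtopology UNIV rho) Qex"
proof -
  have "finite W" by (simp add: W_def)
  then have "compact_space PT"
    by (simp add: compact_space_product_topology compact_space_discrete_topology)
  then have "compactin PT (topspace PT)" by (simp add: compact_space_def)
  then show ?thesis unfolding Qex_image by (rule image_compactin[OF _ fW_cont])
qed

lemma shift_pow: "(shift ^^ k) x = (\<lambda>n. x (n + k))"
  by (induction k) (auto simp: shift_def)

lemma Fex0: "Fex 0 x = (\<lambda>n. x (n + 2))"
  by (simp add: Fex_def shift_pow)

lemma Fex1: "Fex 1 x = (\<lambda>n. x (n + 3))"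
  by (simp add: Fex_def shift_pow)

lemma Fex1': "Fex (Suc 0) x = (\<lambda>n. x (n + 3))"
  by (simp add: Fex_def shift_pow)

lemma Fex2: "Fex 2 x = (\<lambda>n. B)"
  by (simp add: Fex_def)

lemma Fex3: "u \<noteq> 0 \<Longrightarrow> u \<noteq> 1 \<Longrightarrow> u \<noteq> 2 \<Longrightarrow> Fex u x = (if x 0 = B then abinf else (\<lambda>n. B))"
  by (simp add: Fex_def abinf_def)

lemma abinf_shift: "(\<lambda>n. abinf (n + 2)) = abinf"
  by (auto simp: abinf_def)

definition ctl :: "seq \<Rightarrow> nat" where "ctl z = (if z 0 = A then 0 else 1)"

definition G :: "seq \<Rightarrow> seq" where "G z = Fex (ctl z) z"

lemma Q_G: "y \<in> Qex \<Longrightarrow> G y \<in> Qex"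
  using Qex_cases[of y] by (auto simp: G_def ctl_def Fex0 Fex1 Fex1')

lemma Q_Gpow: "y \<in> Qex \<Longrightarrow> (G ^^ k) y \<in> Qex"
  by (induction k) (auto intro: Q_G)

lemma G_agree:
  assumes "\<forall>j<m. y j = x j" "3 \<le> m"
  shows "ctl y = ctl x \<and> (\<forall>j<m-3. G y j = G x j)"
proof -
  have "y 0 = x 0" using assms by auto
  then have c: "ctl y = ctl x" by (simp add: ctl_def)
  moreover have "\<forall>j<m-3. G y j = G x j"
  proof (intro allI impI)
    fix j assume "j < m - 3"
    then have "j + 2 < m" "j + 3 < m" by auto
    then show "G y j = G x j" using c assms(1) by (auto simp: G_def ctl_def Fex0 Fex1 Fex1')
  qed
  ultimately show ?thesis by blast
qed

lemma bdd_rho: "bdd_below (rho y ` Q)"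
  by (rule bdd_belowI[of _ 0]) (auto simp: rho_nonneg)

lemma setdist_Q: "y \<in> Qex \<Longrightarrow> setdist rho y Qex = 0"
proof -
  assume y: "y \<in> Qex"
  have "setdist rho y Qex \<le> rho y y" unfolding setdist_def by (rule cINF_lower[OF bdd_rho y])
  moreover have "0 \<le> setdist rho y Qex" unfolding setdist_def
    using y by (intro cINF_greatest) (auto simp: rho_nonneg)
  ultimately show ?thesis by simp
qed

lemma setdist_nonneg: "0 \<le> setdist rho y Qex"
  unfolding setdist_def using abinf_Q by (intro cINF_greatest) (auto simp: rho_nonneg)

lemma setdist_le1: "setdist rho y Qex \<le> 1"
proof -
  have "setdist rho y Qex \<le> rho y abinf" unfolding setdist_def by (rule cINF_lower[OF bdd_rho abinf_Q])
  then show ?thesis using rho_le1[of y abinf] by linarith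
qed

lemma mean_point:
  assumes x: "x \<in> Qex"
  shows "equi_inv_mean_point rho Fex Uex Qex x"
  unfolding equi_inv_mean_point_def
proof (intro conjI allI impI)
  show "x \<in> Qex" by (rule x)
  fix \<epsilon> :: real assume e: "\<epsilon> > 0"
  obtain K where K: "inverse (real (Suc K)) < \<epsilon>" using reals_Archimedean e by blast
  define \<omega> where "\<omega> = (\<lambda>k. if k < K then ctl ((G ^^ k) x) else if k = K then 2
                          else if k = Suc K then 3 else (0::nat))"
  define \<delta> where "\<delta> = 1 / (real (3 * K) + 1)"
  have dpos: "\<delta> > 0" by (simp add: \<delta>_def)
  have om: "\<omega> \<in> ctrl_seqs Uex" by (auto simp: ctrl_seqs_def Uex_def \<omega>_def ctl_def)
  have main: "(1 / real n) * (\<Sum>i<n. setdist rho (phi Fex i y \<omega>) Qex) < \<epsilon>"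
    if n: "n \<ge> 1" and y: "y \<in> oball rho x \<delta> \<inter> Qex" for n y
  proof -
    have yQ: "y \<in> Qex" using y by blast
    have agree0: "\<forall>j<3*K. y j = x j"
      using y rho_lt[of x y "3*K"] by (auto simp: oball_def \<delta>_def)
    have A: "k \<le> K \<Longrightarrow> phi Fex k y \<omega> = (G ^^ k) y \<and> (\<forall>j<3*(K-k). (G ^^ k) y j = (G ^^ k) x j)" for k
    proof (induction k)
      case 0 then show ?case using agree0 by simp
    next
      case (Suc k)
      then have IH: "phi Fex k y \<omega> = (G ^^ k) y" "\<forall>j<3*(K-k). (G ^^ k) y j = (G ^^ k) x j" by auto
      have m3: "3 \<le> 3*(K-k)" using Suc.prems by simp
      note ga = G_agree[OF IH(2) m3]
      have wk: "\<omega> k = ctl ((G ^^ k) x)" using Suc.prems by (simp add: \<omega>_def)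
      have "phi Fex (Suc k) y \<omega> = G ((G ^^ k) y)" using IH(1) wk ga by (simp add: G_def)
      moreover have "3*(K-k) - 3 = 3*(K - Suc k)" by simp
      ultimately show ?case using ga by simp
    qed
    have P1: "phi Fex (Suc K) y \<omega> = (\<lambda>n. B)" by (simp add: \<omega>_def Fex2)
    have P2: "phi Fex (Suc (Suc K) + j) y \<omega> = abinf" for j
    proof (induction j)
      case 0 then show ?case using P1 by (simp add: \<omega>_def Fex3)
    next
      case (Suc j)
      have "phi Fex (Suc (Suc K) + Suc j) y \<omega> = Fex (\<omega> (Suc (Suc K) + j)) (phi Fex (Suc (Suc K) + j) y \<omega>)"
        by (simp only: add_Suc_right phi.simps)
      also have "\<dots> = Fex 0 abinf" using Suc.IH by (simp add: \<omega>_def)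
      also have "\<dots> = abinf" by (rule ext) (simp add: Fex0 abinf_def)
      finally show ?case .
    qed
    have inQ: "phi Fex i y \<omega> \<in> Qex" if "i \<noteq> Suc K" for i
    proof (cases "i \<le> K")
      case True then show ?thesis using A[of i] Q_Gpow[OF yQ] by simp
    next
      case False
      then have "Suc (Suc K) \<le> i" using that by simp
      then obtain j where "i = Suc (Suc K) + j" using le_Suc_ex by blast
      then show ?thesis using P2 abinf_Q by simp
    qed
    have "(\<Sum>i<n. setdist rho (phi Fex i y \<omega>) Qex) \<le> (\<Sum>i<n. if i = Suc K then 1 else 0)"
      by (rule sum_mono) (auto simp: setdist_le1 setdist_Q inQ)
    also have "\<dots> = (if Suc K < n then 1 else 0)" by simp
    finally have S: "(\<Sum>i<n. setdist rho (phi Fex i y \<omega>) Qex) \<le> (if Suc K < n then 1 else 0)" .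
    show ?thesis
    proof (cases "Suc K < n")
      case True
      have "(1 / real n) * (\<Sum>i<n. setdist rho (phi Fex i y \<omega>) Qex) \<le> 1 / real n"
        using S True n by (simp add: divide_le_eq_1 mult_le_cancel_left1 field_simps)
      also have "\<dots> \<le> inverse (real (Suc K))" using True by (simp add: inverse_eq_divide frac_le)
      finally show ?thesis using K by linarith
    next
      case False
      then have "(\<Sum>i<n. setdist rho (phi Fex i y \<omega>) Qex) \<le> 0" using S by simp
      then have "(1 / real n) * (\<Sum>i<n. setdist rho (phi Fex i y \<omega>) Qex) \<le> 0"
        by (simp add: divide_nonpos_nonneg)
      then show ?thesis using e by linarith
    qed
  qed
  show "\<exists>\<delta>>0. \<exists>\<omega>\<in>ctrl_seqs Uex. \<forall>n. 1 \<le> n \<longrightarrow> (\<forall>y\<in>oball rho x \<delta> \<inter> Qex.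
           1 / real n * (\<Sum>i<n. setdist rho (phi Fex i y \<omega>) Qex) < \<epsilon>)"
    using dpos om main by blast
qed

lemma nbhd1:
  assumes "z \<in> nbhd rho 1 Qex"
  shows "z 0 = A \<or> z 0 = C"
proof -
  have "(INF q\<in>Qex. rho z q) < 1" using assms by (simp add: nbhd_def setdist_def)
  moreover have ne: "Qex \<noteq> {}" using abinf_Q by blast
  ultimately have "\<exists>q\<in>Qex. rho z q < 1" using cINF_less_iff[OF ne bdd_rho[of z Qex], of 1] by blast
  then obtain q where q: "q \<in> Qex" "rho z q < 1" by blast
  then have "rho z q < 1 / (real 0 + 1)" by simp
  then have "z 0 = q 0" using rho_lt by blast
  then show ?thesis using Qex_first[OF q(1)] by simp
qed

definition good :: "(nat \<Rightarrow> nat) \<Rightarrow> seq \<Rightarrow> bool" where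
  "good \<omega> y \<longleftrightarrow> (\<forall>k. phi Fex k y \<omega> \<in> nbhd rho 1 Qex)"

lemma phi_Suc_shift: "phi F (Suc k) y \<omega> = phi F k (F (\<omega> 0) y) (\<lambda>i. \<omega> (Suc i))"
  by (induction k) auto

lemma good_step: "good \<omega> y \<Longrightarrow> good (\<lambda>i. \<omega> (Suc i)) (Fex (\<omega> 0) y)"
  unfolding good_def by (metis phi_Suc_shift)

lemma good_ctl:
  assumes y: "y \<in> Qex" and g: "good \<omega> y"
  shows "\<omega> 0 = ctl y"
proof -
  have "phi Fex (Suc 0) y \<omega> \<in> nbhd rho 1 Qex" using g unfolding good_def by blast
  then have "Fex (\<omega> 0) y \<in> nbhd rho 1 Qex" by simp
  then have z: "Fex (\<omega> 0) y 0 = A \<or> Fex (\<omega> 0) y 0 = C" using nbhd1 by simp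
  consider "\<omega> 0 = 0" | "\<omega> 0 = 1" | "\<omega> 0 = 2" | "\<omega> 0 \<noteq> 0 \<and> \<omega> 0 \<noteq> 1 \<and> \<omega> 0 \<noteq> 2" by blast
  then show ?thesis
  proof cases
    case 1
    then have "y 2 = A \<or> y 2 = C" using z by (simp add: Fex0 eval_nat_numeral)
    then show ?thesis using 1 Qex_cases[OF y] by (auto simp: ctl_def)
  next
    case 2
    then have "y 3 = A \<or> y 3 = C" using z by (simp add: Fex1 Fex1')
    moreover have "y 0 = A \<Longrightarrow> y 3 = B \<or> y 3 = D"
      using Qex_cases[OF y] Qex_second[of "\<lambda>n. y (n + 2)"] by (auto simp: numeral_3_eq_3)
    ultimately show ?thesis using 2 by (auto simp: ctl_def)
  next
    case 3
    then show ?thesis using z by (simp add: Fex2)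
  next
    case 4
    then have "Fex (\<omega> 0) y = (if y 0 = B then abinf else (\<lambda>n. B))" by (simp add: Fex3)
    moreover have "y 0 \<noteq> B" using Qex_first[OF y] by auto
    ultimately show ?thesis using z by simp
  qed
qed

lemma good_unique:
  "\<forall>\<omega> y y'. y \<in> Qex \<longrightarrow> y' \<in> Qex \<longrightarrow> good \<omega> y \<longrightarrow> good \<omega> y' \<longrightarrow> y j = y' j"
proof (induction j rule: less_induct)
  case (less j)
  show ?case
  proof (intro allI impI)
    fix \<omega> y y' assume y: "y \<in> Qex" and y': "y' \<in> Qex" and g: "good \<omega> y" and g': "good \<omega> y'"
    have c: "ctl y = ctl y'" using good_ctl[OF y g] good_ctl[OF y' g'] by simp
    have gs: "good (\<lambda>i. \<omega> (Suc i)) (Fex (\<omega> 0) y)" "good (\<lambda>i. \<omega> (Suc i)) (Fex (\<omega> 0) y')"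
      using good_step[OF g] good_step[OF g'] .
    have w: "\<omega> 0 = ctl y" using good_ctl[OF y g] .
    show "y j = y' j"
    proof (cases "y 0 = A")
      case True
      then have "y' 0 = A" using c Qex_first[OF y'] by (auto simp: ctl_def)
      then have cy: "y 1 = B" "y' 1 = B" "(\<lambda>n. y (n+2)) \<in> Qex" "(\<lambda>n. y' (n+2)) \<in> Qex"
        using Qex_cases[OF y] Qex_cases[OF y'] True by auto
      have w0: "\<omega> 0 = 0" using w True by (simp add: ctl_def)
      show ?thesis
      proof (cases "j < 2")
        case True2: True
        then have "j = 0 \<or> j = 1" by auto
        then show ?thesis using cy True \<open>y' 0 = A\<close> by auto
      next
        case False
        then obtain i where i: "j = i + 2" by (metis add.commute le_Suc_ex not_less)
        have IH: "\<forall>\<omega> y y'. y \<in> Qex \<longrightarrow> y' \<in> Qex \<longrightarrow> good \<omega> y \<longrightarrow> good \<omega> y' \<longrightarrow> y i = y' i"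
          using less.IH[of i] i by simp
        have m1: "Fex 0 y \<in> Qex" "Fex 0 y' \<in> Qex" using cy(3,4) by (simp_all only: Fex0)
        have h1: "good (\<lambda>i. \<omega> (Suc i)) (Fex 0 y)" "good (\<lambda>i. \<omega> (Suc i)) (Fex 0 y')"
          using gs unfolding w0 by simp_all
        have "Fex 0 y i = Fex 0 y' i" using IH m1 h1 by blast
        then show ?thesis using i by (simp add: Fex0)
      qed
    next
      case False
      then have yC: "y 0 = C" using Qex_first[OF y] by auto
      then have "y' 0 = C" using c Qex_first[OF y'] by (auto simp: ctl_def)
      then have cy: "y 1 = D" "y' 1 = D" "y 2 = E" "y' 2 = E" "(\<lambda>n. y (n+3)) \<in> Qex" "(\<lambda>n. y' (n+3)) \<in> Qex"
        using Qex_cases[OF y] Qex_cases[OF y'] yC by auto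
      have w0: "\<omega> 0 = 1" using w yC by (simp add: ctl_def)
      show ?thesis
      proof (cases "j < 3")
        case True
        then have "j = 0 \<or> j = 1 \<or> j = 2" by auto
        then show ?thesis using cy yC \<open>y' 0 = C\<close> by auto
      next
        case False
        then obtain i where i: "j = i + 3" by (metis add.commute le_Suc_ex not_less)
        have IH: "\<forall>\<omega> y y'. y \<in> Qex \<longrightarrow> y' \<in> Qex \<longrightarrow> good \<omega> y \<longrightarrow> good \<omega> y' \<longrightarrow> y i = y' i"
          using less.IH[of i] i by simp
        have m1: "Fex 1 y \<in> Qex" "Fex 1 y' \<in> Qex" using cy(5,6) by (simp_all only: Fex1)
        have h1: "good (\<lambda>i. \<omega> (Suc i)) (Fex 1 y)" "good (\<lambda>i. \<omega> (Suc i)) (Fex 1 y')"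
          using gs unfolding w0 by simp_all
        have "Fex 1 y i = Fex 1 y' i" using IH m1 h1 by blast
        then show ?thesis using i by (simp add: Fex1 Fex1')
      qed
    qed
  qed
qed

definition ym :: "nat \<Rightarrow> seq" where
  "ym m = (\<lambda>j. if j < 2*m then abinf j else if j = 2*m then C else if j = 2*m+1 then D
              else if j = 2*m+2 then E else abinf (j - 2*m - 3))"

lemma ym_Q: "ym m \<in> Qex"
proof (induction m)
  case 0
  show ?case by (rule Qex_consCDE[OF abinf_Q]) (auto simp: ym_def)
next
  case (Suc m)
  show ?case
  proof (rule Qex_consAB[OF Suc.IH])
    show "ym (Suc m) 0 = A" by (simp add: ym_def abinf_def)
    show "ym (Suc m) 1 = B" by (simp add: ym_def abinf_def)
    show "\<forall>n. ym (Suc m) (n + 2) = ym m n" by (auto simp: ym_def abinf_def)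
  qed
qed

lemma ym_close: "rho abinf (ym m) \<le> 1 / (real (2*m) + 1)"
  by (rule rho_le) (simp add: ym_def)

lemma ym_inj: "inj ym"
proof (rule injI)
  have ne: "ym m \<noteq> ym m'" if "m < m'" for m m'
  proof -
    have "ym m (2*m) = C" by (simp add: ym_def)
    moreover have "ym m' (2*m) = A" using that by (simp add: ym_def abinf_def)
    ultimately show ?thesis by auto
  qed
  fix m m' assume "ym m = ym m'"
  then show "m = m'" using ne by (metis linorder_neqE_nat)
qed

lemma not_fin: "\<not> fin_equi_inv rho Fex Uex Qex"
proof
  assume "fin_equi_inv rho Fex Uex Qex"
  then have "fin_equi_inv_point rho Fex Uex Qex abinf" using abinf_Q by (simp add: fin_equi_inv_def)
  then obtain \<delta> Fs where d: "\<delta> > 0" and Fs: "finite Fs"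
      and cov: "\<forall>y \<in> oball rho abinf \<delta> \<inter> Qex. \<exists>\<omega>\<in>Fs. \<forall>k. phi Fex k y \<omega> \<in> nbhd rho 1 Qex"
    unfolding fin_equi_inv_point_def by (meson zero_less_one)
  obtain M where M: "inverse (real (Suc M)) < \<delta>" using reals_Archimedean d by blast
  let ?S = "ym ` {M..}"
  have S: "?S \<subseteq> oball rho abinf \<delta> \<inter> Qex"
  proof
    fix y assume "y \<in> ?S"
    then obtain m where m: "m \<ge> M" "y = ym m" by auto
    have "rho abinf y \<le> 1 / (real (2*m) + 1)" using ym_close m by simp
    also have "\<dots> \<le> inverse (real (Suc M))" using m(1) by (simp add: inverse_eq_divide frac_le)
    finally show "y \<in> oball rho abinf \<delta> \<inter> Qex" using M m ym_Q by (simp add: oball_def)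
  qed
  then have "\<forall>y\<in>?S. \<exists>\<omega>\<in>Fs. good \<omega> y" using cov S unfolding good_def by blast
  then obtain c where c: "\<forall>y\<in>?S. c y \<in> Fs \<and> good (c y) y" by metis
  have "inj_on c ?S"
  proof (rule inj_onI)
    fix y y' assume y: "y \<in> ?S" and y': "y' \<in> ?S" and e: "c y = c y'"
    have "y \<in> Qex" "y' \<in> Qex" using y y' S by auto
    moreover have "good (c y) y" using c y by blast
    moreover have "good (c y') y'" using c y' by blast
    then have "good (c y) y'" using e by simp
    ultimately show "y = y'" using good_unique by blast
  qed
  moreover have "c ` ?S \<subseteq> Fs" using c by auto
  ultimately have "finite ?S" using Fs by (rule inj_on_finite)
  then have "finite {M..}" using ym_inj by (meson finite_imageD inj_on_subset subset_UNIV)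
  then show False using infinite_Ici by blast
qed

theorem mainTheorem15:
  shows "compactin (Metric_space.mtopology UNIV rho) Qex
         \<and> equi_inv_mean rho Fex Uex Qex
         \<and> \<not> fin_equi_inv rho Fex Uex Qex"
  using Qex_compact mean_point not_fin by (simp add: equi_inv_mean_def)

end
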